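(* For each $n$, let $Y_n$ and $\tilde Y_n$ be random variables taking values in the same countable set $\mathcal Y_n$. If $\lim_{n\to\infty}d(P_{Y_n},P_{\tilde Y_n})=0$, then $$\lim_{n\to\infty}L\Big(\log\tfrac{1}{P_{Y_n}(Y_n)},\ \log\tfrac{1}{P_{\tilde Y_n}(\tilde Y_n)}\Big)=0 .$$
   Context: Logarithms are natural. The variational distance is $d(P,Q)=\sum_a|P(a)-Q(a)|$. For real-valued random variables $U,V$, the Lévy distance is $$L(U,V)=\inf\{m>0:\ \forall x\in\mathbb R,\ \Pr\{U\le x-m\}-m\le\Pr\{V\le x\}\le \Pr\{U\le x+m\}+m\}.$$ *)

theory Defs
  imports "HOL-Probability.Probability"
begin

definition var_dist :: "'a pmf \<Rightarrow> 'a pmf \<Rightarrow> real" where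
  "var_dist P Q = infsum (\<lambda>a. \<bar>pmf P a - pmf Q a\<bar>) UNIV"

text \<open>Levy distance between real random variables U, V, given through their
  distribution functions F(x) = Pr{U <= x}, G(x) = Pr{V <= x}.\<close>
definition levy_dist :: "(real \<Rightarrow> real) \<Rightarrow> (real \<Rightarrow> real) \<Rightarrow> real" where
  "levy_dist F G = Inf {m. m > 0 \<and> (\<forall>x. F (x - m) - m \<le> G x \<and> G x \<le> F (x + m) + m)}"

definition info_cdf :: "'a pmf \<Rightarrow> real \<Rightarrow> real" where
  "info_cdf P x = measure_pmf.prob P {y. ln (1 / pmf P y) \<le> x}"

end

theory Submission
  imports Defs
begin

lemma pmf_summ: "pmf p summable_on A"
proof -
  have "Infinite_Sum.abs_summable_on (pmf p) A"
    using abs_summable_equivalent pmf_abs_summable by blast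
  then show ?thesis by simp
qed

lemma prob_infsum: "measure_pmf.prob p A = infsum (pmf p) A"
  using measure_pmf_conv_infsetsum infsetsum_infsum[OF pmf_abs_summable] by metis

lemma diff_summ: "(\<lambda>a. pmf Q a - pmf P a) summable_on A"
proof -
  have "(\<lambda>a. pmf Q a + (-1) * pmf P a) summable_on A"
    by (intro summable_on_add summable_on_cmult_right pmf_summ)
  then show ?thesis by simp
qed

lemma absdiff_summ: "(\<lambda>a. \<bar>pmf P a - pmf Q a\<bar>) summable_on A"
  by (rule summable_on_comparison_test[OF summable_on_add[OF pmf_summ[of P A] pmf_summ[of Q A]]])
     (auto simp: abs_if)

lemma var_dist_sub: "infsum (\<lambda>a. \<bar>pmf P a - pmf Q a\<bar>) A \<le> var_dist P Q"
  unfolding var_dist_def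
  by (rule infsum_mono_neutral[OF absdiff_summ absdiff_summ]) auto

lemma var_dist_sym: "var_dist P Q = var_dist Q P"
  unfolding var_dist_def by (simp add: abs_minus_commute)

lemma info_cdf_alt: "info_cdf P x = measure_pmf.prob P {y. exp (-x) \<le> pmf P y}"
proof -
  have "{y. ln (1 / pmf P y) \<le> x} \<inter> set_pmf P = {y. exp (-x) \<le> pmf P y} \<inter> set_pmf P"
  proof (intro set_eqI iffI)
    fix y assume "y \<in> {y. ln (1 / pmf P y) \<le> x} \<inter> set_pmf P"
    then have p: "pmf P y > 0" and l: "ln (1 / pmf P y) \<le> x" by (auto simp: set_pmf_iff)
    have "- ln (pmf P y) \<le> x" using l p by (simp add: ln_div)
    then have "exp (-x) \<le> exp (ln (pmf P y))" by simp
    then show "y \<in> {y. exp (-x) \<le> pmf P y} \<inter> set_pmf P" using p by (simp add: set_pmf_iff)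
  next
    fix y assume "y \<in> {y. exp (-x) \<le> pmf P y} \<inter> set_pmf P"
    then have p: "pmf P y > 0" and l: "exp (-x) \<le> pmf P y" by (auto simp: set_pmf_iff)
    have "ln (exp (-x)) \<le> ln (pmf P y)" using l p by (subst ln_le_cancel_iff) auto
    then show "y \<in> {y. ln (1 / pmf P y) \<le> x} \<inter> set_pmf P" using p by (simp add: ln_div set_pmf_iff)
  qed
  then show ?thesis unfolding info_cdf_def by (metis measure_Int_set_pmf)
qed

lemma key:
  assumes m: "m > 0"
  shows "info_cdf Q x \<le> info_cdf P (x + m) + var_dist P Q + var_dist P Q / m"
proof -
  define A where "A = {y. exp (-x) \<le> pmf Q y}"
  define C where "C = {y. exp (-(x+m)) \<le> pmf P y}"
  define d where "d = (\<lambda>a. \<bar>pmf P a - pmf Q a\<bar>)"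
  have "infsum (pmf Q) A = infsum (\<lambda>a. pmf P a + (pmf Q a - pmf P a)) A" by simp
  also have "\<dots> = infsum (pmf P) A + infsum (\<lambda>a. pmf Q a - pmf P a) A"
    by (rule infsum_add[OF pmf_summ]) (rule diff_summ)
  also have "infsum (\<lambda>a. pmf Q a - pmf P a) A \<le> infsum d A"
    unfolding d_def
    by (rule infsum_mono[OF diff_summ absdiff_summ]) auto
  also have "infsum d A \<le> var_dist P Q" unfolding d_def by (rule var_dist_sub)
  finally have 1: "infsum (pmf Q) A \<le> infsum (pmf P) A + var_dist P Q" by simp
  have "infsum (pmf P) A = infsum (pmf P) (A \<inter> C) + infsum (pmf P) (A - C)"
    by (subst infsum_Un_disjoint[OF pmf_summ pmf_summ, symmetric]) (auto intro!: arg_cong[where f="infsum _"])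
  also have "infsum (pmf P) (A \<inter> C) \<le> infsum (pmf P) C"
    by (rule infsum_mono_neutral[OF pmf_summ pmf_summ]) auto
  also have "infsum (pmf P) (A - C) \<le> var_dist P Q / m"
  proof -
    have "\<forall>y \<in> A - C. m * pmf P y \<le> d y"
    proof
      fix y assume y: "y \<in> A - C"
      then have q: "exp (-x) \<le> pmf Q y" and p: "pmf P y < exp (-(x+m))"
        by (auto simp: A_def C_def)
      have "exp m * pmf P y < exp m * exp (-(x+m))" using p by simp
      also have "exp m * exp (-(x+m)) = exp (-x)" by (simp add: exp_add[symmetric])
      finally have "exp m * pmf P y < pmf Q y" using q by simp
      moreover have "(1 + m) * pmf P y \<le> exp m * pmf P y"
        by (rule mult_right_mono) (auto simp: exp_ge_add_one_self add.commute)
      ultimately show "m * pmf P y \<le> d y" by (simp add: d_def algebra_simps)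
    qed
    then have "infsum (\<lambda>y. m * pmf P y) (A - C) \<le> infsum d (A - C)"
      unfolding d_def
      by (intro infsum_mono summable_on_cmult_right pmf_summ absdiff_summ) (auto simp: d_def)
    also have "\<dots> \<le> var_dist P Q" unfolding d_def by (rule var_dist_sub)
    finally have "m * infsum (pmf P) (A - C) \<le> var_dist P Q"
      by (simp add: infsum_cmult_right')
    then show ?thesis using m by (simp add: field_simps mult.commute)
  qed
  finally have 2: "infsum (pmf P) A \<le> infsum (pmf P) C + var_dist P Q / m" by simp
  show ?thesis unfolding info_cdf_alt prob_infsum
    using 1 2 by (simp add: A_def C_def)
qed

lemma good:
  assumes m: "0 < m" "m \<le> 1" and d: "2 * var_dist P Q \<le> m\<^sup>2"
  shows "m \<in> {m. m > 0 \<and> (\<forall>x. info_cdf P (x - m) - m \<le> info_cdf Q x \<and> info_cdf Q x \<le> info_cdf P (x + m) + m)}"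
proof -
  let ?d = "var_dist P Q"
  have "?d + ?d / m \<le> m"
  proof -
    have "?d \<ge> 0" unfolding var_dist_def by (rule infsum_nonneg) auto
    then have "?d \<le> ?d / m" using m by (simp add: field_simps mult_left_le_one_le)
    moreover have "?d / m \<le> m / 2" using m d by (simp add: field_simps power2_eq_square)
    ultimately show ?thesis by linarith
  qed
  moreover have "info_cdf Q x \<le> info_cdf P (x + m) + m" for x
    using key[OF m(1), of Q x P] calculation by linarith
  moreover have "info_cdf P (x - m) \<le> info_cdf Q x + m" for x
    using key[OF m(1), of P "x - m" Q] calculation by (simp add: var_dist_sym)
  ultimately show ?thesis using m by (simp add: diff_le_eq)
qed

theorem lemma4:
  fixes P Q :: "nat \<Rightarrow> 'a pmf"
  assumes "(\<lambda>n. var_dist (P n) (Q n)) \<longlonglongrightarrow> 0"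
  shows "(\<lambda>n. levy_dist (info_cdf (P n)) (info_cdf (Q n))) \<longlonglongrightarrow> 0"
proof (rule LIMSEQ_I)
  fix r :: real assume r: "r > 0"
  define m where "m = min (r/2) 1"
  have m: "0 < m" "m \<le> 1" "m < r" using r by (auto simp: m_def)
  have "m\<^sup>2 / 2 > 0" using m by simp
  from LIMSEQ_D[OF assms this] obtain no where
    no: "\<And>n. n \<ge> no \<Longrightarrow> norm (var_dist (P n) (Q n) - 0) < m\<^sup>2 / 2" by blast
  show "\<exists>no. \<forall>n\<ge>no. norm (levy_dist (info_cdf (P n)) (info_cdf (Q n)) - 0) < r"
  proof (intro exI allI impI)
    fix n assume "n \<ge> no"
    then have "2 * var_dist (P n) (Q n) \<le> m\<^sup>2" using no[of n] by simp
    from good[OF m(1,2) this] have mem: "m \<in> {m. m > 0 \<and> (\<forall>x. info_cdf (P n) (x - m) - m \<le> info_cdf (Q n) x \<and> info_cdf (Q n) x \<le> info_cdf (P n) (x + m) + m)}" .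
    let ?S = "{m. m > 0 \<and> (\<forall>x. info_cdf (P n) (x - m) - m \<le> info_cdf (Q n) x \<and> info_cdf (Q n) x \<le> info_cdf (P n) (x + m) + m)}"
    have bdd: "bdd_below ?S" by (rule bdd_belowI[of _ 0]) auto
    have "Inf ?S \<le> m" by (rule cInf_lower[OF mem bdd])
    moreover have "Inf ?S \<ge> 0" by (rule cInf_greatest) (use mem in auto)
    ultimately show "norm (levy_dist (info_cdf (P n)) (info_cdf (Q n)) - 0) < r"
      unfolding levy_dist_def using m by simp
  qed
qed

end
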